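(* Let $z(s)$ be an orbit of the Hamiltonian $G_{\epsilon,0}$ which remains in a bounded region $\Omega\subset T^*\mathbb{T}^2$ for $s\in[s_0,s_1]$. Then there exists a constant $K>0$, independent of $\epsilon$, such that $$|G_{\epsilon,0}(z(s_1),s_1)-G_{\epsilon,0}(z(s_0),s_0)|\le K|s_1-s_0+1|\epsilon^\sigma.$$
   Context: $G_{\epsilon,0}(x,y,\theta)=\frac12\langle Ay,y\rangle-V(x)+\epsilon^\sigma R_{\epsilon,0}(x,y,\theta)$ on $T^*\mathbb{T}^2$ with time $\theta$, where $A$ is positive definite symmetric, $V\in C^r(\mathbb{T}^2,\mathbb{R})$, $\sigma\in(0,\frac12)$, $\omega_3\neq0$ is a fixed constant, and $R_{\epsilon,0}(x,y,\theta)$ depends on $\theta$ through $\tau=\omega_3\theta/\sqrt\epsilon$, being $2\pi$-periodic in $\tau$ and $C^4$-smooth with $C^4$ norms (also of $\partial_zR_{\epsilon,0}$) bounded on bounded sets uniformly in $\epsilon$. *)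

theory Defs
  imports "HOL-Analysis.Analysis"
begin

fun pderivs :: "'a::euclidean_space list \<Rightarrow> ('a \<Rightarrow> real) \<Rightarrow> 'a \<Rightarrow> real" where
  "pderivs [] f = f"
| "pderivs (v # vs) f = (\<lambda>x. frechet_derivative (pderivs vs f) (at x) v)"

definition Ck :: "nat \<Rightarrow> ('a::euclidean_space \<Rightarrow> real) \<Rightarrow> bool" where
  "Ck k f \<longleftrightarrow>
     (\<forall>vs. set vs \<subseteq> Basis \<and> length vs \<le> k \<longrightarrow>
        continuous_on UNIV (pderivs vs f) \<and>
        (length vs < k \<longrightarrow> (\<forall>x. pderivs vs f differentiable (at x))))"

definition Ck_norm_le :: "nat \<Rightarrow> ('a::euclidean_space \<Rightarrow> real) \<Rightarrow> 'a set \<Rightarrow> real \<Rightarrow> bool" where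
  "Ck_norm_le k f S M \<longleftrightarrow>
     (\<forall>vs. set vs \<subseteq> Basis \<and> length vs \<le> k \<longrightarrow> (\<forall>p\<in>S. \<bar>pderivs vs f p\<bar> \<le> M))"

text \<open>The Hamiltonian G_{eps,0}(x,y,theta) = 1/2 <Ay,y> - V(x) + eps^sigma R_eps(x,y,omega3 theta/sqrt eps),
  written on the universal cover R^2 x R^2 of T^*T^2 (x is the lifted angle).\<close>
definition G_eps :: "real^2^2 \<Rightarrow> (real^2 \<Rightarrow> real) \<Rightarrow> (real \<Rightarrow> real^2 \<Rightarrow> real^2 \<Rightarrow> real \<Rightarrow> real)
    \<Rightarrow> real \<Rightarrow> real \<Rightarrow> real \<Rightarrow> real^2 \<Rightarrow> real^2 \<Rightarrow> real \<Rightarrow> real" where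
  "G_eps A V R \<sigma> \<omega>3 \<epsilon> x y \<theta> =
     1/2 * (y \<bullet> (A *v y)) - V x + \<epsilon> powr \<sigma> * R \<epsilon> x y (\<omega>3 * \<theta> / sqrt \<epsilon>)"

definition ham_orbit :: "(real^2 \<Rightarrow> real^2 \<Rightarrow> real \<Rightarrow> real) \<Rightarrow> (real \<Rightarrow> real^2) \<Rightarrow> (real \<Rightarrow> real^2)
    \<Rightarrow> real \<Rightarrow> real \<Rightarrow> bool" where
  "ham_orbit H x y s0 s1 \<longleftrightarrow>
     (\<forall>s\<in>{s0..s1}. \<exists>gx gy.
        GDERIV (\<lambda>u. H u (y s) s) (x s) :> gx \<and>
        GDERIV (\<lambda>v. H (x s) v s) (y s) :> gy \<and>
        (x has_vector_derivative gy) (at s within {s0..s1}) \<and>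
        (y has_vector_derivative - gx) (at s within {s0..s1}))"

end

theory Submission
  imports Defs
begin


lemma fd_shift:
  fixes f :: "'a::real_normed_vector \<Rightarrow> real"
  assumes per: "\<forall>q. f (q + c) = f q" and dif: "f differentiable at p"
  shows "frechet_derivative f (at (p + c)) = frechet_derivative f (at p)"
proof -
  let ?D = "frechet_derivative f (at p)"
  have d: "(f has_derivative ?D) (at p)" using dif frechet_derivative_works by blast
  have s: "((\<lambda>q. q - c) has_derivative (\<lambda>h. h)) (at (p + c))"
    by (auto intro!: derivative_eq_intros)
  have "((\<lambda>q. f (q - c)) has_derivative (\<lambda>h. ?D h)) (at (p + c))"
    using has_derivative_compose[OF s, of f ?D] d by simp
  moreover have "(\<lambda>q. f (q - c)) = f"
  proof
    fix q show "f (q - c) = f q" using per[rule_format, of "q - c"] by simp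
  qed
  ultimately have "(f has_derivative ?D) (at (p + c))" by simp
  then show ?thesis using frechet_derivative_at by metis
qed

lemma lin_bound:
  fixes L :: "'a::euclidean_space \<Rightarrow> real"
  assumes lin: "linear L" and b: "\<forall>b\<in>Basis. \<bar>L b\<bar> \<le> M"
  shows "\<bar>L w\<bar> \<le> real DIM('a) * M * norm w"
proof -
  have "L w = L (\<Sum>b\<in>Basis. (w \<bullet> b) *\<^sub>R b)" by (simp add: euclidean_representation)
  also have "\<dots> = (\<Sum>b\<in>Basis. (w \<bullet> b) * L b)"
    by (simp add: linear_sum[OF lin] linear_scale[OF lin])
  finally have "\<bar>L w\<bar> \<le> (\<Sum>b\<in>Basis. \<bar>w \<bullet> b\<bar> * \<bar>L b\<bar>)"
    by (simp add: sum_abs[THEN order_trans] abs_mult)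
  also have "\<dots> \<le> (\<Sum>b\<in>(Basis::'a set). norm w * M)"
  proof (rule sum_mono)
    fix b :: 'a assume bb: "b \<in> Basis"
    show "\<bar>w \<bullet> b\<bar> * \<bar>L b\<bar> \<le> norm w * M"
      by (rule mult_mono) (use bb b Basis_le_norm in auto)
  qed
  also have "\<dots> = real DIM('a) * M * norm w" by simp
  finally show ?thesis .
qed



lemma shift_int:
  fixes g :: "'a::real_vector \<Rightarrow> 'b"
  assumes "\<forall>x. g (x + c) = g x"
  shows "g (x + of_int k *\<^sub>R c) = g x"
proof -
  have pos: "g (z + real n *\<^sub>R c) = g z" for z n
  proof (induction n arbitrary: z)
    case (Suc n)
    have "z + real (Suc n) *\<^sub>R c = (z + real n *\<^sub>R c) + c" by (simp add: algebra_simps)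
    then show ?case using Suc.IH[of z] assms[rule_format, of "z + real n *\<^sub>R c"] by (simp add: add.assoc)
  qed simp
  show ?thesis
  proof (cases "k \<ge> 0")
    case True then show ?thesis using pos[of x "nat k"] by simp
  next
    case False
    then have s0: "of_int k + real (nat (-k)) = 0" by simp
    have "(x + of_int k *\<^sub>R c) + real (nat (-k)) *\<^sub>R c = x + (of_int k + real (nat (-k))) *\<^sub>R c"
      by (simp only: add.assoc scaleR_left_distrib)
    then have "x = (x + of_int k *\<^sub>R c) + real (nat (-k)) *\<^sub>R c" using s0 by simp
    then have "g x = g ((x + of_int k *\<^sub>R c) + real (nat (-k)) *\<^sub>R c)" by (rule arg_cong)
    also have "\<dots> = g (x + of_int k *\<^sub>R c)" by (rule pos)
    finally show ?thesis by simp
  qed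
qed

lemma per_reduce:
  fixes g :: "real^2 \<Rightarrow> 'b"
  assumes "\<forall>x. \<forall>e\<in>(Basis::(real^2) set). g (x + (2*pi) *\<^sub>R e) = g x"
  shows "\<exists>x'\<in>cbox 0 (\<chi> i. 2*pi). g x = g x'"
proof -
  define k where "k i = \<lfloor>x$i / (2*pi)\<rfloor>" for i
  define x' where "x' = (\<chi> i. x$i - 2*pi*k i)"
  have x'c: "x' \<in> cbox 0 (\<chi> i. 2*pi)"
  proof -
    have "0 \<le> x$i - 2*pi*k i \<and> x$i - 2*pi*k i \<le> 2*pi" for i
    proof -
      have a: "real_of_int (k i) \<le> x$i/(2*pi)" "x$i/(2*pi) < real_of_int (k i) + 1"
        unfolding k_def by linarith+
      have p: "2*pi > 0" by simp
      from a p show ?thesis by (simp add: field_simps)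
    qed
    then show ?thesis by (simp add: mem_box_cart x'_def)
  qed
  have e1: "axis 1 1 \<in> (Basis::(real^2) set)" "axis 2 1 \<in> (Basis::(real^2) set)"
    by (auto simp: Basis_vec_def)
  have xeq: "x = (x' + of_int (k 1) *\<^sub>R ((2*pi) *\<^sub>R axis 1 1)) + of_int (k 2) *\<^sub>R ((2*pi) *\<^sub>R axis 2 1)"
    by (simp add: vec_eq_iff x'_def forall_2 axis_def)
  have h1: "\<forall>z. g (z + (2*pi) *\<^sub>R axis 1 1) = g z" and h2: "\<forall>z. g (z + (2*pi) *\<^sub>R axis 2 1) = g z"
    using assms e1 by blast+
  have "g x = g x'"
  proof -
    have "g x = g (x' + of_int (k 1) *\<^sub>R ((2*pi) *\<^sub>R axis 1 1))"
      by (subst xeq, rule shift_int[OF h2])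
    also have "\<dots> = g x'" by (rule shift_int[OF h1])
    finally show ?thesis .
  qed
  then show ?thesis using x'c by blast
qed

lemma lin_expand:
  fixes L :: "'a::euclidean_space \<Rightarrow> real"
  assumes lin: "linear L"
  shows "L w = (\<Sum>b\<in>Basis. (w \<bullet> b) * L b)"
proof -
  have "L w = L (\<Sum>b\<in>Basis. (w \<bullet> b) *\<^sub>R b)" by (simp add: euclidean_representation)
  also have "\<dots> = (\<Sum>b\<in>Basis. (w \<bullet> b) * L b)"
    by (simp add: linear_sum[OF lin] linear_scale[OF lin])
  finally show ?thesis .
qed



theorem lemma5p2:
  fixes A :: "real^2^2" and V :: "real^2 \<Rightarrow> real"
    and R :: "real \<Rightarrow> real^2 \<Rightarrow> real^2 \<Rightarrow> real \<Rightarrow> real"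
    and \<sigma> \<omega>3 \<epsilon>0 :: real and r :: nat
  assumes A_sym: "transpose A = A"
    and A_pos: "\<forall>v::real^2. v \<noteq> 0 \<longrightarrow> v \<bullet> (A *v v) > 0"
    and r_ge: "r \<ge> 1"
    and V_Cr: "Ck r V"
    and V_per: "\<forall>x. \<forall>e\<in>(Basis::(real^2) set). V (x + (2*pi) *\<^sub>R e) = V x"
    and \<sigma>_range: "0 < \<sigma>" "\<sigma> < 1/2"
    and \<omega>3_nz: "\<omega>3 \<noteq> 0"
    and \<epsilon>0_pos: "\<epsilon>0 > 0"
    and R_per_x: "\<forall>\<epsilon> x y \<tau>. \<forall>e\<in>(Basis::(real^2) set). R \<epsilon> (x + (2*pi) *\<^sub>R e) y \<tau> = R \<epsilon> x y \<tau>"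
    and R_per_\<tau>: "\<forall>\<epsilon> x y \<tau>. R \<epsilon> x y (\<tau> + 2*pi) = R \<epsilon> x y \<tau>"
    and R_C4: "\<forall>\<epsilon>\<in>{0<..\<epsilon>0}.
        Ck 4 (\<lambda>((x,y),\<tau>). R \<epsilon> x y \<tau>) \<and>
        (\<forall>e\<in>(\<lambda>u. (u, 0)) ` (Basis :: ((real^2) \<times> (real^2)) set).
            Ck 4 (pderivs [e] (\<lambda>((x,y),\<tau>). R \<epsilon> x y \<tau>)))"
    and R_bounds: "\<forall>B::((real^2) \<times> (real^2)) set. bounded B \<longrightarrow> (\<exists>M. \<forall>\<epsilon>\<in>{0<..\<epsilon>0}.
        Ck_norm_le 4 (\<lambda>((x,y),\<tau>). R \<epsilon> x y \<tau>) (B \<times> UNIV) M \<and>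
        (\<forall>e\<in>(\<lambda>u. (u, 0)) ` (Basis :: ((real^2) \<times> (real^2)) set).
            Ck_norm_le 4 (pderivs [e] (\<lambda>((x,y),\<tau>). R \<epsilon> x y \<tau>)) (B \<times> UNIV) M))"
  shows "\<forall>\<Omega>::((real^2) \<times> (real^2)) set. bounded (snd ` \<Omega>) \<longrightarrow>
    (\<exists>K>0. \<forall>\<epsilon>\<in>{0<..\<epsilon>0}. \<forall>s0 s1 (x::real \<Rightarrow> real^2) (y::real \<Rightarrow> real^2).
       s0 \<le> s1 \<and> ham_orbit (G_eps A V R \<sigma> \<omega>3 \<epsilon>) x y s0 s1 \<and>
       (\<forall>s\<in>{s0..s1}. (x s, y s) \<in> \<Omega>) \<longrightarrow>
       \<bar>G_eps A V R \<sigma> \<omega>3 \<epsilon> (x s1) (y s1) s1 - G_eps A V R \<sigma> \<omega>3 \<epsilon> (x s0) (y s0) s0\<bar>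
         \<le> K * \<bar>s1 - s0 + 1\<bar> * \<epsilon> powr \<sigma>)"
  proof (intro allI impI)
  fix \<Omega> :: "((real^2) \<times> (real^2)) set"
  assume bY: "bounded (snd ` \<Omega>)"
  define Y where "Y = snd ` \<Omega>"
  define Cb where "Cb = cbox (0::real^2) (\<chi> i. 2*pi)"
  define fR where "fR \<epsilon> = (\<lambda>((x,y),\<tau>). R \<epsilon> x y \<tau>)" for \<epsilon>
  have fR_app: "fR \<epsilon> ((x,y),\<tau>) = R \<epsilon> x y \<tau>" for \<epsilon> x y \<tau> by (simp add: fR_def)
  have bB: "bounded (Cb \<times> Y)" unfolding Cb_def Y_def by (rule bounded_Times[OF bounded_cbox bY])
  obtain M where M: "\<forall>\<epsilon>\<in>{0<..\<epsilon>0}. Ck_norm_le 4 (fR \<epsilon>) ((Cb \<times> Y) \<times> UNIV) M"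
  proof -
    from R_bounds[rule_format, OF bB] obtain M where
      "\<forall>\<epsilon>\<in>{0<..\<epsilon>0}. Ck_norm_le 4 (\<lambda>((x,y),\<tau>). R \<epsilon> x y \<tau>) ((Cb \<times> Y) \<times> UNIV) M" by blast
    then show ?thesis using that unfolding fR_def by blast
  qed
  have Rdiff: "fR \<epsilon> differentiable at q" if "\<epsilon> \<in> {0<..\<epsilon>0}" for \<epsilon> q
  proof -
    have "Ck 4 (fR \<epsilon>)" using R_C4 that unfolding fR_def by blast
    then have "pderivs [] (fR \<epsilon>) differentiable (at q)" unfolding Ck_def
      by (drule_tac x="[]" in spec) (metis (no_types) empty_set empty_subsetI list.size(3) zero_le zero_less_numeral prod.collapse)
    then show ?thesis by simp
  qed
  have fR_per: "\<forall>q. fR \<epsilon> (q + (((2*pi) *\<^sub>R e, 0), 0)) = fR \<epsilon> q" if "e \<in> Basis" for \<epsilon> e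
  proof
    fix q :: "((real^2) \<times> (real^2)) \<times> real"
    obtain a b t where q: "q = ((a,b),t)" by (metis prod.collapse)
    show "fR \<epsilon> (q + (((2*pi) *\<^sub>R e, 0), 0)) = fR \<epsilon> q"
      using R_per_x that by (simp add: q fR_app)
  qed
  have RB: "\<bar>R \<epsilon> x y \<tau>\<bar> \<le> M" if e: "\<epsilon> \<in> {0<..\<epsilon>0}" and yY: "y \<in> Y" for \<epsilon> x y \<tau>
  proof -
    have "\<forall>x. \<forall>e\<in>(Basis::(real^2) set). (\<lambda>u. R \<epsilon> u y \<tau>) (x + (2*pi) *\<^sub>R e) = (\<lambda>u. R \<epsilon> u y \<tau>) x"
      using R_per_x by simp
    from per_reduce[OF this] obtain x' where x': "x' \<in> Cb" "R \<epsilon> x y \<tau> = R \<epsilon> x' y \<tau>"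
      unfolding Cb_def by blast
    have "\<bar>pderivs [] (fR \<epsilon>) ((x',y),\<tau>)\<bar> \<le> M"
      using M e x' yY unfolding Ck_norm_le_def by (drule_tac x=\<epsilon> in bspec) (auto dest!: spec[of _ "[]"])
    then show ?thesis using x' by (simp add: fR_app)
  qed
  have DB: "\<bar>frechet_derivative (fR \<epsilon>) (at ((x,y),\<tau>)) b\<bar> \<le> M"
    if e: "\<epsilon> \<in> {0<..\<epsilon>0}" and yY: "y \<in> Y" and b: "b \<in> Basis" for \<epsilon> x y \<tau> b
  proof -
    have "\<forall>x. \<forall>e\<in>(Basis::(real^2) set). (\<lambda>u. frechet_derivative (fR \<epsilon>) (at ((u,y),\<tau>)) b) (x + (2*pi) *\<^sub>R e)
        = (\<lambda>u. frechet_derivative (fR \<epsilon>) (at ((u,y),\<tau>)) b) x"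
    proof (intro allI ballI)
      fix u :: "real^2" and e :: "real^2" assume eB: "e \<in> Basis"
      have "frechet_derivative (fR \<epsilon>) (at (((u,y),\<tau>) + (((2*pi) *\<^sub>R e, 0), 0))) = frechet_derivative (fR \<epsilon>) (at ((u,y),\<tau>))"
        by (rule fd_shift[OF fR_per[OF eB] Rdiff[OF e]])
      then show "(\<lambda>u. frechet_derivative (fR \<epsilon>) (at ((u,y),\<tau>)) b) (u + (2*pi) *\<^sub>R e)
        = (\<lambda>u. frechet_derivative (fR \<epsilon>) (at ((u,y),\<tau>)) b) u" by simp
    qed
    from per_reduce[OF this] obtain x' where x': "x' \<in> Cb"
      "frechet_derivative (fR \<epsilon>) (at ((x,y),\<tau>)) b = frechet_derivative (fR \<epsilon>) (at ((x',y),\<tau>)) b"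
      unfolding Cb_def by blast
    have "\<bar>pderivs [b] (fR \<epsilon>) ((x',y),\<tau>)\<bar> \<le> M"
      using M e x' yY b unfolding Ck_norm_le_def by (drule_tac x=\<epsilon> in bspec) (auto dest!: spec[of _ "[b]"])
    then show ?thesis using x' by simp
  qed
  have Vdiff: "V differentiable at x" for x
  proof -
    have "pderivs [] V differentiable (at x)" using V_Cr r_ge unfolding Ck_def
      by (drule_tac x="[]" in spec) simp
    then show ?thesis by simp
  qed
  have Vper: "\<forall>q. V (q + (2*pi) *\<^sub>R e) = V q" if "e \<in> Basis" for e
    using V_per that by blast
  define \<phi> where "\<phi> x = (\<Sum>b\<in>(Basis::(real^2) set). \<bar>frechet_derivative V (at x) b\<bar>)" for x
  have \<phi>cont: "continuous_on UNIV \<phi>"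
  proof -
    have "continuous_on UNIV (\<lambda>x. frechet_derivative V (at x) b)" if "b \<in> Basis" for b
    proof -
      have "continuous_on UNIV (pderivs [b] V)" using V_Cr r_ge that unfolding Ck_def
        by (drule_tac x="[b]" in spec) simp
      then show ?thesis by simp
    qed
    then show ?thesis unfolding \<phi>_def by (intro continuous_intros) auto
  qed
  obtain CV where CV: "\<And>x. \<phi> x \<le> CV"
  proof -
    have "compact (\<phi> ` Cb)" unfolding Cb_def
      by (rule compact_continuous_image[OF continuous_on_subset[OF \<phi>cont]]) auto
    then obtain a where a: "\<forall>z\<in>\<phi> ` Cb. \<bar>z\<bar> \<le> a" using compact_imp_bounded bounded_real by meson
    have "\<phi> x \<le> a" for x
    proof -
      have "\<forall>x. \<forall>e\<in>(Basis::(real^2) set). \<phi> (x + (2*pi) *\<^sub>R e) = \<phi> x"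
        unfolding \<phi>_def using fd_shift[OF Vper Vdiff] by simp
      from per_reduce[OF this] obtain x' where "x' \<in> Cb" "\<phi> x = \<phi> x'" unfolding Cb_def by blast
      then show ?thesis using a by fastforce
    qed
    then show ?thesis using that by blast
  qed
  obtain CA where CA: "\<And>v. v \<in> Y \<Longrightarrow> norm (A *v v) \<le> CA"
  proof -
    have "bounded ((*v) A ` Y)" using bY unfolding Y_def
      by (rule bounded_linear_image) simp
    then show ?thesis using that unfolding bounded_iff by blast
  qed
  have symA: "u \<bullet> (A *v w) = (A *v u) \<bullet> w" for u w :: "real^2"
  proof -
    have "u \<bullet> (A *v w) = (u v* A) \<bullet> w" by (simp add: dot_lmul_matrix)
    also have "u v* A = A *v u" using vector_transpose_matrix[of u A] A_sym by simp
    finally show ?thesis .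
  qed
  define C where "C = 5 * \<bar>M\<bar> * \<bar>CA\<bar> + \<bar>CV\<bar> * \<bar>M\<bar>"
  define K where "K = C + 2 * \<bar>M\<bar> + 1"
  have C0: "C \<ge> 0" unfolding C_def by simp
  show "\<exists>K>0. \<forall>\<epsilon>\<in>{0<..\<epsilon>0}. \<forall>s0 s1 (x::real \<Rightarrow> real^2) (y::real \<Rightarrow> real^2).
       s0 \<le> s1 \<and> ham_orbit (G_eps A V R \<sigma> \<omega>3 \<epsilon>) x y s0 s1 \<and>
       (\<forall>s\<in>{s0..s1}. (x s, y s) \<in> \<Omega>) \<longrightarrow>
       \<bar>G_eps A V R \<sigma> \<omega>3 \<epsilon> (x s1) (y s1) s1 - G_eps A V R \<sigma> \<omega>3 \<epsilon> (x s0) (y s0) s0\<bar>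
         \<le> K * \<bar>s1 - s0 + 1\<bar> * \<epsilon> powr \<sigma>"
  proof (intro exI[of _ K] conjI ballI allI impI)
    show "K > 0" unfolding K_def using C0 by simp
    fix \<epsilon> s0 s1 and x y :: "real \<Rightarrow> real^2"
    assume e: "\<epsilon> \<in> {0<..\<epsilon>0}"
    assume H: "s0 \<le> s1 \<and> ham_orbit (G_eps A V R \<sigma> \<omega>3 \<epsilon>) x y s0 s1 \<and> (\<forall>s\<in>{s0..s1}. (x s, y s) \<in> \<Omega>)"
    define S where "S = {s0..s1}"
    define \<tau> where "\<tau> s = \<omega>3 * s / sqrt \<epsilon>" for s
    define H0 where "H0 s = 1/2 * (y s \<bullet> (A *v y s)) - V (x s)" for s
    define E where "E = \<epsilon> powr \<sigma>"
    have E0: "E \<ge> 0" unfolding E_def by simp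
    have Geq: "G_eps A V R \<sigma> \<omega>3 \<epsilon> (x s) (y s) s = H0 s + E * R \<epsilon> (x s) (y s) (\<tau> s)" for s
      by (simp add: G_eps_def H0_def \<tau>_def E_def)
    have yY: "y s \<in> Y" if "s \<in> S" for s
      using H that unfolding S_def Y_def by (metis image_eqI snd_conv)
    have deriv: "\<exists>d. (H0 has_derivative (\<lambda>h. h * d)) (at s within S) \<and> \<bar>d\<bar> \<le> E * C"
      if sS: "s \<in> S" for s
    proof -
      obtain gx gy where g: "GDERIV (\<lambda>u. G_eps A V R \<sigma> \<omega>3 \<epsilon> u (y s) s) (x s) :> gx"
        "GDERIV (\<lambda>v. G_eps A V R \<sigma> \<omega>3 \<epsilon> (x s) v s) (y s) :> gy"
        "(x has_vector_derivative gy) (at s within S)" "(y has_vector_derivative - gx) (at s within S)"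
        using H sS unfolding ham_orbit_def S_def by blast
      define p where "p = ((x s, y s), \<tau> s)"
      define D where "D = frechet_derivative (fR \<epsilon>) (at p)"
      define DV where "DV = frechet_derivative V (at (x s))"
      have hD: "(fR \<epsilon> has_derivative D) (at p)" using Rdiff[OF e] frechet_derivative_works D_def by blast
      have hV: "(V has_derivative DV) (at (x s))" using Vdiff frechet_derivative_works DV_def by blast
      have linD: "linear D" using hD by (rule has_derivative_linear)
      have linDV: "linear DV" using hV by (rule has_derivative_linear)
      have px: "((\<lambda>u. G_eps A V R \<sigma> \<omega>3 \<epsilon> u (y s) s) has_derivative (\<lambda>w. - DV w + E * D ((w,0),0))) (at (x s))"
      proof -
        have fe: "(\<lambda>u. G_eps A V R \<sigma> \<omega>3 \<epsilon> u (y s) s) = (\<lambda>u. 1/2 * (y s \<bullet> (A *v y s)) - V u + E * fR \<epsilon> ((u, y s), \<tau> s))"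
          by (simp add: G_eps_def fR_app E_def \<tau>_def)
        have inner: "((\<lambda>u. ((u, y s), \<tau> s)) has_derivative (\<lambda>w. ((w,0),0))) (at (x s))"
          by (auto intro!: derivative_eq_intros)
        have c: "((\<lambda>u. fR \<epsilon> ((u, y s), \<tau> s)) has_derivative (\<lambda>w. D ((w,0),0))) (at (x s))"
          using has_derivative_compose[OF inner, of "fR \<epsilon>" D] hD by (simp add: p_def)
        show ?thesis unfolding fe by (auto intro!: derivative_eq_intros hV c)
      qed
      have gxeq: "(\<lambda>h. h \<bullet> gx) = (\<lambda>w. - DV w + E * D ((w,0),0))"
        using has_derivative_unique g(1) px unfolding gderiv_def by blast
      have q: "((\<lambda>v. v \<bullet> (A *v v)) has_derivative (\<lambda>w. y s \<bullet> (A *v w) + w \<bullet> (A *v y s))) (at (y s))"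
      proof -
        have i1: "((\<lambda>v. v) has_derivative (\<lambda>w. w)) (at (y s))" by (rule has_derivative_ident)
        have i2: "((\<lambda>v. A *v v) has_derivative (\<lambda>w. A *v w)) (at (y s))"
          by (rule bounded_linear.has_derivative[OF matrix_vector_mul_bounded_linear has_derivative_ident])
        show ?thesis using has_derivative_inner[OF i1 i2] by simp
      qed
      have py: "((\<lambda>v. G_eps A V R \<sigma> \<omega>3 \<epsilon> (x s) v s) has_derivative
          (\<lambda>w. 1/2 * (y s \<bullet> (A *v w) + w \<bullet> (A *v y s)) - 0 + E * D ((0,w),0))) (at (y s))"
      proof -
        have fe: "(\<lambda>v. G_eps A V R \<sigma> \<omega>3 \<epsilon> (x s) v s) = (\<lambda>v. 1/2 * (v \<bullet> (A *v v)) - V (x s) + E * fR \<epsilon> ((x s, v), \<tau> s))"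
          by (simp add: G_eps_def fR_app E_def \<tau>_def)
        have inner: "((\<lambda>v. ((x s, v), \<tau> s)) has_derivative (\<lambda>w. ((0,w),0))) (at (y s))"
          by (auto intro!: derivative_eq_intros)
        have c: "((\<lambda>v. fR \<epsilon> ((x s, v), \<tau> s)) has_derivative (\<lambda>w. D ((0,w),0))) (at (y s))"
          using has_derivative_compose[OF inner, of "fR \<epsilon>" D] hD by (simp add: p_def)
        show ?thesis unfolding fe
          by (intro has_derivative_add has_derivative_diff has_derivative_mult_right q c has_derivative_const)
      qed
      have gyeq: "(\<lambda>h. h \<bullet> gy) = (\<lambda>w. 1/2 * (y s \<bullet> (A *v w) + w \<bullet> (A *v y s)) - 0 + E * D ((0,w),0))"
        using has_derivative_unique g(2) py unfolding gderiv_def by blast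
      have xd: "(x has_derivative (\<lambda>h. h *\<^sub>R gy)) (at s within S)" using g(3) by (simp add: has_vector_derivative_def)
      have yd: "(y has_derivative (\<lambda>h. h *\<^sub>R - gx)) (at s within S)" using g(4) by (simp add: has_vector_derivative_def)
      have Ayd: "((\<lambda>t. A *v y t) has_derivative (\<lambda>h. A *v (h *\<^sub>R - gx))) (at s within S)"
        by (rule bounded_linear.has_derivative[OF matrix_vector_mul_bounded_linear yd])
      have iq: "((\<lambda>t. y t \<bullet> (A *v y t)) has_derivative (\<lambda>h. y s \<bullet> (A *v (h *\<^sub>R - gx)) + (h *\<^sub>R - gx) \<bullet> (A *v y s))) (at s within S)"
        by (rule has_derivative_inner[OF yd Ayd])
      have Vx: "((\<lambda>t. V (x t)) has_derivative (\<lambda>h. DV (h *\<^sub>R gy))) (at s within S)"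
        by (rule has_derivative_compose[OF xd hV])
      have H0d: "(H0 has_derivative (\<lambda>h. 1/2 * (y s \<bullet> (A *v (h *\<^sub>R - gx)) + (h *\<^sub>R - gx) \<bullet> (A *v y s)) - DV (h *\<^sub>R gy))) (at s within S)"
        unfolding H0_def by (intro has_derivative_diff has_derivative_mult_right iq Vx)
      define dd where "dd = - ((A *v y s) \<bullet> gx) - DV gy"
      have fn: "(\<lambda>h. 1/2 * (y s \<bullet> (A *v (h *\<^sub>R - gx)) + (h *\<^sub>R - gx) \<bullet> (A *v y s)) - DV (h *\<^sub>R gy)) = (\<lambda>h. h * dd)"
      proof
        fix h :: real
        have "y s \<bullet> (A *v (h *\<^sub>R - gx)) = - h * ((A *v y s) \<bullet> gx)" by (simp add: symA)
        moreover have "(h *\<^sub>R - gx) \<bullet> (A *v y s) = - h * ((A *v y s) \<bullet> gx)" by (simp add: inner_commute)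
        moreover have "DV (h *\<^sub>R gy) = h * DV gy" by (simp add: linear_scale[OF linDV])
        ultimately show "1/2 * (y s \<bullet> (A *v (h *\<^sub>R - gx)) + (h *\<^sub>R - gx) \<bullet> (A *v y s)) - DV (h *\<^sub>R gy) = h * dd"
          by (simp add: dd_def algebra_simps)
      qed
      define Ay where "Ay = A *v y s"
      define D1 where "D1 = D ((Ay, 0), 0)"
      define Sm where "Sm = (\<Sum>b\<in>(Basis::(real^2) set). D ((0,b),0) * DV b)"
      have a1: "Ay \<bullet> gx = - DV Ay + E * D1" using fun_cong[OF gxeq, of Ay] by (simp add: D1_def)
      have a2: "gy \<bullet> b = Ay \<bullet> b + E * D ((0,b),0)" for b
      proof -
        have "b \<bullet> gy = 1/2 * (y s \<bullet> (A *v b) + b \<bullet> (A *v y s)) - 0 + E * D ((0,b),0)" using fun_cong[OF gyeq, of b] by simp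
        moreover have "y s \<bullet> (A *v b) = Ay \<bullet> b" by (simp add: symA Ay_def)
        moreover have "b \<bullet> (A *v y s) = Ay \<bullet> b" by (simp add: Ay_def inner_commute)
        moreover have "gy \<bullet> b = b \<bullet> gy" by (rule inner_commute)
        ultimately show ?thesis by simp
      qed
      have "DV gy = (\<Sum>b\<in>Basis. (gy \<bullet> b) * DV b)" by (rule lin_expand[OF linDV])
      also have "\<dots> = (\<Sum>b\<in>Basis. (Ay \<bullet> b) * DV b) + E * Sm"
        by (simp add: a2 Sm_def distrib_right sum.distrib sum_distrib_left algebra_simps)
      also have "(\<Sum>b\<in>Basis. (Ay \<bullet> b) * DV b) = DV Ay" by (rule lin_expand[OF linDV, symmetric])
      finally have a3: "DV gy = DV Ay + E * Sm" .
      have ddE: "dd = - (E * (D1 + Sm))" unfolding dd_def using a1 a3 by (simp add: Ay_def algebra_simps)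
      have DBp: "\<forall>b\<in>Basis. \<bar>D b\<bar> \<le> \<bar>M\<bar>"
        using DB[OF e yY[OF sS]] unfolding D_def p_def by (meson abs_ge_self order_trans)
      have bD1: "\<bar>D1\<bar> \<le> 5 * \<bar>M\<bar> * \<bar>CA\<bar>"
      proof -
        have "\<bar>D1\<bar> \<le> real DIM(((real^2) \<times> (real^2)) \<times> real) * \<bar>M\<bar> * norm ((Ay, 0::real^2), 0::real)"
          unfolding D1_def by (rule lin_bound[OF linD DBp])
        also have "\<dots> = 5 * \<bar>M\<bar> * norm Ay" by (simp add: norm_Pair)
        also have "\<dots> \<le> 5 * \<bar>M\<bar> * \<bar>CA\<bar>" using CA[OF yY[OF sS]] unfolding Ay_def
          by (intro mult_left_mono) auto
        finally show ?thesis .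
      qed
      have bSm: "\<bar>Sm\<bar> \<le> \<bar>CV\<bar> * \<bar>M\<bar>"
      proof -
        have "\<bar>Sm\<bar> \<le> (\<Sum>b\<in>(Basis::(real^2) set). \<bar>D ((0,b),0)\<bar> * \<bar>DV b\<bar>)"
          unfolding Sm_def by (rule order_trans[OF sum_abs]) (simp add: abs_mult)
        also have "\<dots> \<le> (\<Sum>b\<in>(Basis::(real^2) set). \<bar>M\<bar> * \<bar>DV b\<bar>)"
        proof (rule sum_mono)
          fix b :: "real^2" assume b: "b \<in> Basis"
          have "((0::real^2,b),0::real) \<in> Basis" using b by (simp add: Basis_prod_def)
          then show "\<bar>D ((0,b),0)\<bar> * \<bar>DV b\<bar> \<le> \<bar>M\<bar> * \<bar>DV b\<bar>" using DBp by (intro mult_right_mono) auto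
        qed
        also have "\<dots> = \<bar>M\<bar> * \<phi> (x s)" by (simp add: \<phi>_def DV_def sum_distrib_left)
        also have "\<dots> \<le> \<bar>M\<bar> * \<bar>CV\<bar>" using CV[of "x s"] by (intro mult_left_mono) auto
        finally show ?thesis by (simp add: mult.commute)
      qed
      have "\<bar>dd\<bar> \<le> E * C"
      proof -
        have "\<bar>dd\<bar> = E * \<bar>D1 + Sm\<bar>" using E0 by (simp add: ddE abs_mult)
        also have "\<dots> \<le> E * C" unfolding C_def using bD1 bSm E0
          by (intro mult_left_mono) (auto intro: order_trans[OF abs_triangle_ineq])
        finally show ?thesis .
      qed
      then show ?thesis using H0d fn by auto
    qed

    then obtain d where d: "\<And>s. s \<in> S \<Longrightarrow> (H0 has_derivative (\<lambda>h. h * d s)) (at s within S) \<and> \<bar>d s\<bar> \<le> E * C"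
      by metis
    have "norm (H0 s1 - H0 s0) \<le> (E * C) * norm (s1 - s0)"
    proof (rule differentiable_bound[of S H0 "\<lambda>s h. h * d s"])
      show "convex S" unfolding S_def by simp
      show "s1 \<in> S" "s0 \<in> S" using H unfolding S_def by auto
      show "(H0 has_derivative (\<lambda>h. h * d s)) (at s within S)" if "s \<in> S" for s using d that by blast
      show "onorm (\<lambda>h. h * d s) \<le> E * C" if "s \<in> S" for s
      proof (rule onorm_le)
        fix h :: real
        have "norm (h * d s) = \<bar>d s\<bar> * norm h" by (simp add: abs_mult)
        also have "\<dots> \<le> E * C * norm h" using d[OF that] by (simp add: mult_right_mono)
        finally show "norm (h * d s) \<le> E * C * norm h" .
      qed
    qed
    then have h1: "\<bar>H0 s1 - H0 s0\<bar> \<le> E * C * (s1 - s0)" using H by simp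
    have r1: "\<bar>R \<epsilon> (x s1) (y s1) (\<tau> s1)\<bar> \<le> M" "\<bar>R \<epsilon> (x s0) (y s0) (\<tau> s0)\<bar> \<le> M"
      using RB[OF e yY] H unfolding S_def by auto
    have "\<bar>E * R \<epsilon> (x s1) (y s1) (\<tau> s1) - E * R \<epsilon> (x s0) (y s0) (\<tau> s0)\<bar> \<le> E * (2 * \<bar>M\<bar>)"
    proof -
      have "\<bar>E * R \<epsilon> (x s1) (y s1) (\<tau> s1) - E * R \<epsilon> (x s0) (y s0) (\<tau> s0)\<bar>
          = E * \<bar>R \<epsilon> (x s1) (y s1) (\<tau> s1) - R \<epsilon> (x s0) (y s0) (\<tau> s0)\<bar>"
        using E0 by (simp add: abs_mult right_diff_distrib[symmetric])
      also have "\<dots> \<le> E * (2 * \<bar>M\<bar>)" using r1 E0 by (intro mult_left_mono) auto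
      finally show ?thesis .
    qed
    then have "\<bar>G_eps A V R \<sigma> \<omega>3 \<epsilon> (x s1) (y s1) s1 - G_eps A V R \<sigma> \<omega>3 \<epsilon> (x s0) (y s0) s0\<bar>
        \<le> E * C * (s1 - s0) + E * (2 * \<bar>M\<bar>)" using h1 unfolding Geq by linarith
    also have "\<dots> \<le> K * \<bar>s1 - s0 + 1\<bar> * E"
    proof -
      have "0 \<le> s1 - s0" using H by simp
      then have "C * (s1 - s0) + 2 * \<bar>M\<bar> \<le> K * (s1 - s0 + 1)"
      proof -
        have m: "0 \<le> \<bar>M\<bar> * (s1 - s0)" using \<open>0 \<le> s1 - s0\<close> by simp
        have "K * (s1 - s0 + 1) = C * (s1 - s0) + C + 2 * (\<bar>M\<bar> * (s1 - s0)) + 2 * \<bar>M\<bar> + (s1 - s0) + 1"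
          by (simp add: K_def algebra_simps)
        then show ?thesis using m C0 \<open>0 \<le> s1 - s0\<close> by linarith
      qed
      then have "E * (C * (s1 - s0) + 2 * \<bar>M\<bar>) \<le> E * (K * (s1 - s0 + 1))" using E0 by (rule mult_left_mono)
      then show ?thesis using \<open>0 \<le> s1 - s0\<close> by (simp add: algebra_simps)
    qed
    finally show "\<bar>G_eps A V R \<sigma> \<omega>3 \<epsilon> (x s1) (y s1) s1 - G_eps A V R \<sigma> \<omega>3 \<epsilon> (x s0) (y s0) s0\<bar>
         \<le> K * \<bar>s1 - s0 + 1\<bar> * \<epsilon> powr \<sigma>" unfolding E_def .
  qed
qed

end
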